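(* Let $i\colon\mathcal{A}\to\mathcal{A}'$ and $j\colon\mathcal{B}\to\mathcal{B}'$ be inclusions of cofinal full additive subcategories, and let $F\colon\mathcal{A}\to\mathcal{B}$ and $F'\colon\mathcal{A}'\to\mathcal{B}'$ be functors of additive categories with $j\circ F=F'\circ i$. Then: (1) the inclusion $i$ is faithfully flat; (2) $F$ is flat (respectively faithfully flat) if and only if $F'$ is flat (respectively faithfully flat).
   Context: A full additive subcategory $\mathcal{A}\subseteq\mathcal{A}'$ is cofinal if for every object $A'$ of $\mathcal{A}'$ there exist an object $A$ of $\mathcal{A}$ and morphisms $A'\to A\to A'$ composing to $\mathrm{id}_{A'}$. A sequence $A_0\xrightarrow{f}A_1\xrightarrow{g}A_2$ in an additive category is exact (at $A_1$) if $g\circ f=0$ and every morphism $h\colon A\to A_1$ with $g\circ h=0$ factors as $h=f\circ\bar h$. A functor $F$ of additive categories is flat if it maps exact sequences to exact sequences, and faithfully flat if a sequence is exact if and only if its image under $F$ is exact. *)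

theory Defs
  imports Main
begin

text \<open>An additive category presented concretely: objects, typed hom-sets,
  composition (cmp g f = g after f), identities, and the abelian group
  structure (addm, zerom, negm) on each hom-set.\<close>

record ('o, 'm) addcat =
  Obj :: "'o set"
  Hom :: "'o \<Rightarrow> 'o \<Rightarrow> 'm set"
  cmp :: "'m \<Rightarrow> 'm \<Rightarrow> 'm"
  ident :: "'o \<Rightarrow> 'm"
  addm :: "'m \<Rightarrow> 'm \<Rightarrow> 'm"
  zerom :: "'o \<Rightarrow> 'o \<Rightarrow> 'm"
  negm :: "'m \<Rightarrow> 'm"

definition is_category :: "('o, 'm, 'x) addcat_scheme \<Rightarrow> bool" where
  "is_category C \<longleftrightarrow>
     (\<forall>a\<in>Obj C. ident C a \<in> Hom C a a) \<and>
     (\<forall>a\<in>Obj C. \<forall>b\<in>Obj C. \<forall>c\<in>Obj C. \<forall>f\<in>Hom C a b. \<forall>g\<in>Hom C b c.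
        cmp C g f \<in> Hom C a c) \<and>
     (\<forall>a\<in>Obj C. \<forall>b\<in>Obj C. \<forall>c\<in>Obj C. \<forall>d\<in>Obj C.
        \<forall>f\<in>Hom C a b. \<forall>g\<in>Hom C b c. \<forall>h\<in>Hom C c d.
        cmp C h (cmp C g f) = cmp C (cmp C h g) f) \<and>
     (\<forall>a\<in>Obj C. \<forall>b\<in>Obj C. \<forall>f\<in>Hom C a b.
        cmp C f (ident C a) = f \<and> cmp C (ident C b) f = f)"

definition is_preadditive :: "('o, 'm, 'x) addcat_scheme \<Rightarrow> bool" where
  "is_preadditive C \<longleftrightarrow> is_category C \<and>
     (\<forall>a\<in>Obj C. \<forall>b\<in>Obj C.
        zerom C a b \<in> Hom C a b \<and>
        (\<forall>f\<in>Hom C a b. \<forall>g\<in>Hom C a b. addm C f g \<in> Hom C a b) \<and>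
        (\<forall>f\<in>Hom C a b. negm C f \<in> Hom C a b) \<and>
        (\<forall>f\<in>Hom C a b. \<forall>g\<in>Hom C a b. \<forall>h\<in>Hom C a b.
           addm C (addm C f g) h = addm C f (addm C g h)) \<and>
        (\<forall>f\<in>Hom C a b. \<forall>g\<in>Hom C a b. addm C f g = addm C g f) \<and>
        (\<forall>f\<in>Hom C a b. addm C f (zerom C a b) = f) \<and>
        (\<forall>f\<in>Hom C a b. addm C f (negm C f) = zerom C a b)) \<and>
     (\<forall>a\<in>Obj C. \<forall>b\<in>Obj C. \<forall>c\<in>Obj C.
        \<forall>f\<in>Hom C a b. \<forall>f'\<in>Hom C a b. \<forall>g\<in>Hom C b c. \<forall>g'\<in>Hom C b c.
        cmp C (addm C g g') f = addm C (cmp C g f) (cmp C g' f) \<and>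
        cmp C g (addm C f f') = addm C (cmp C g f) (cmp C g f'))"

definition is_additive_category :: "('o, 'm, 'x) addcat_scheme \<Rightarrow> bool" where
  "is_additive_category C \<longleftrightarrow> is_preadditive C \<and>
     \<comment> \<open>zero object\<close>
     (\<exists>z\<in>Obj C. \<forall>a\<in>Obj C. (\<exists>!f. f \<in> Hom C z a) \<and> (\<exists>!f. f \<in> Hom C a z)) \<and>
     \<comment> \<open>binary biproducts\<close>
     (\<forall>a\<in>Obj C. \<forall>b\<in>Obj C. \<exists>c\<in>Obj C.
        \<exists>p1\<in>Hom C c a. \<exists>p2\<in>Hom C c b. \<exists>i1\<in>Hom C a c. \<exists>i2\<in>Hom C b c.
          cmp C p1 i1 = ident C a \<and> cmp C p2 i2 = ident C b \<and>
          cmp C p2 i1 = zerom C a b \<and> cmp C p1 i2 = zerom C b a \<and>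
          addm C (cmp C i1 p1) (cmp C i2 p2) = ident C c)"

definition additive_functor ::
  "('o, 'm, 'x) addcat_scheme \<Rightarrow> ('p, 'n, 'y) addcat_scheme \<Rightarrow>
   ('o \<Rightarrow> 'p) \<Rightarrow> ('m \<Rightarrow> 'n) \<Rightarrow> bool" where
  "additive_functor C D Fo Fm \<longleftrightarrow>
     is_additive_category C \<and> is_additive_category D \<and>
     (\<forall>a\<in>Obj C. Fo a \<in> Obj D) \<and>
     (\<forall>a\<in>Obj C. \<forall>b\<in>Obj C. \<forall>f\<in>Hom C a b. Fm f \<in> Hom D (Fo a) (Fo b)) \<and>
     (\<forall>a\<in>Obj C. Fm (ident C a) = ident D (Fo a)) \<and>
     (\<forall>a\<in>Obj C. \<forall>b\<in>Obj C. \<forall>c\<in>Obj C. \<forall>f\<in>Hom C a b. \<forall>g\<in>Hom C b c.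
        Fm (cmp C g f) = cmp D (Fm g) (Fm f)) \<and>
     (\<forall>a\<in>Obj C. \<forall>b\<in>Obj C. \<forall>f\<in>Hom C a b. \<forall>g\<in>Hom C a b.
        Fm (addm C f g) = addm D (Fm f) (Fm g))"

definition exact_at ::
  "('o, 'm, 'x) addcat_scheme \<Rightarrow> 'o \<Rightarrow> 'o \<Rightarrow> 'o \<Rightarrow> 'm \<Rightarrow> 'm \<Rightarrow> bool" where
  "exact_at C a0 a1 a2 f g \<longleftrightarrow>
     a0 \<in> Obj C \<and> a1 \<in> Obj C \<and> a2 \<in> Obj C \<and> f \<in> Hom C a0 a1 \<and> g \<in> Hom C a1 a2 \<and>
     cmp C g f = zerom C a0 a2 \<and>
     (\<forall>a\<in>Obj C. \<forall>h\<in>Hom C a a1. cmp C g h = zerom C a a2 \<longrightarrow>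
        (\<exists>h'\<in>Hom C a a0. h = cmp C f h'))"

definition flat ::
  "('o, 'm, 'x) addcat_scheme \<Rightarrow> ('p, 'n, 'y) addcat_scheme \<Rightarrow>
   ('o \<Rightarrow> 'p) \<Rightarrow> ('m \<Rightarrow> 'n) \<Rightarrow> bool" where
  "flat C D Fo Fm \<longleftrightarrow>
     (\<forall>a0 a1 a2 f g. exact_at C a0 a1 a2 f g \<longrightarrow>
        exact_at D (Fo a0) (Fo a1) (Fo a2) (Fm f) (Fm g))"

definition faithfully_flat ::
  "('o, 'm, 'x) addcat_scheme \<Rightarrow> ('p, 'n, 'y) addcat_scheme \<Rightarrow>
   ('o \<Rightarrow> 'p) \<Rightarrow> ('m \<Rightarrow> 'n) \<Rightarrow> bool" where
  "faithfully_flat C D Fo Fm \<longleftrightarrow>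
     (\<forall>a0\<in>Obj C. \<forall>a1\<in>Obj C. \<forall>a2\<in>Obj C. \<forall>f\<in>Hom C a0 a1. \<forall>g\<in>Hom C a1 a2.
        exact_at C a0 a1 a2 f g \<longleftrightarrow>
        exact_at D (Fo a0) (Fo a1) (Fo a2) (Fm f) (Fm g))"

definition full_additive_subcat ::
  "('o, 'm, 'x) addcat_scheme \<Rightarrow> ('o, 'm, 'y) addcat_scheme \<Rightarrow> bool" where
  "full_additive_subcat A A' \<longleftrightarrow>
     is_additive_category A \<and> is_additive_category A' \<and>
     Obj A \<subseteq> Obj A' \<and>
     (\<forall>a\<in>Obj A. \<forall>b\<in>Obj A. Hom A a b = Hom A' a b) \<and>
     (\<forall>a\<in>Obj A. ident A a = ident A' a) \<and>
     (\<forall>a\<in>Obj A. \<forall>b\<in>Obj A. \<forall>c\<in>Obj A. \<forall>f\<in>Hom A a b. \<forall>g\<in>Hom A b c.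
        cmp A g f = cmp A' g f) \<and>
     (\<forall>a\<in>Obj A. \<forall>b\<in>Obj A. zerom A a b = zerom A' a b \<and>
        (\<forall>f\<in>Hom A a b. negm A f = negm A' f \<and>
           (\<forall>g\<in>Hom A a b. addm A f g = addm A' f g)))"

definition cofinal ::
  "('o, 'm, 'x) addcat_scheme \<Rightarrow> ('o, 'm, 'y) addcat_scheme \<Rightarrow> bool" where
  "cofinal A A' \<longleftrightarrow>
     (\<forall>a'\<in>Obj A'. \<exists>a\<in>Obj A. \<exists>s\<in>Hom A' a' a. \<exists>r\<in>Hom A' a a'.
        cmp A' r s = ident A' a')"

end

theory Submission
  imports Defs
begin


context
  fixes C :: "('o,'m,'x) addcat_scheme"
  assumes pa: "is_preadditive C"
begin

lemma cat: "is_category C" using pa unfolding is_preadditive_def by blast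

lemma id_hom[intro]: "a \<in> Obj C \<Longrightarrow> ident C a \<in> Hom C a a"
  using cat unfolding is_category_def by blast

lemma comp_hom[intro]: "a \<in> Obj C \<Longrightarrow> b \<in> Obj C \<Longrightarrow> c \<in> Obj C \<Longrightarrow> f \<in> Hom C a b \<Longrightarrow> g \<in> Hom C b c \<Longrightarrow> cmp C g f \<in> Hom C a c"
  using cat unfolding is_category_def by blast

lemma assoc: "a \<in> Obj C \<Longrightarrow> b \<in> Obj C \<Longrightarrow> c \<in> Obj C \<Longrightarrow> d \<in> Obj C \<Longrightarrow> f \<in> Hom C a b \<Longrightarrow> g \<in> Hom C b c \<Longrightarrow> h \<in> Hom C c d \<Longrightarrow>
   cmp C h (cmp C g f) = cmp C (cmp C h g) f"
  using cat unfolding is_category_def by blast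

lemma idr: "a \<in> Obj C \<Longrightarrow> b \<in> Obj C \<Longrightarrow> f \<in> Hom C a b \<Longrightarrow> cmp C f (ident C a) = f"
  using cat unfolding is_category_def by blast
lemma idl: "a \<in> Obj C \<Longrightarrow> b \<in> Obj C \<Longrightarrow> f \<in> Hom C a b \<Longrightarrow> cmp C (ident C b) f = f"
  using cat unfolding is_category_def by blast

lemma zero_hom[intro]: "a \<in> Obj C \<Longrightarrow> b \<in> Obj C \<Longrightarrow> zerom C a b \<in> Hom C a b"
  using pa unfolding is_preadditive_def by blast
lemma add_hom[intro]: "a \<in> Obj C \<Longrightarrow> b \<in> Obj C \<Longrightarrow> f \<in> Hom C a b \<Longrightarrow> g \<in> Hom C a b \<Longrightarrow> addm C f g \<in> Hom C a b"
  using pa unfolding is_preadditive_def by blast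
lemma neg_hom[intro]: "a \<in> Obj C \<Longrightarrow> b \<in> Obj C \<Longrightarrow> f \<in> Hom C a b \<Longrightarrow> negm C f \<in> Hom C a b"
  using pa unfolding is_preadditive_def by blast
lemma add_assoc: "a \<in> Obj C \<Longrightarrow> b \<in> Obj C \<Longrightarrow> f \<in> Hom C a b \<Longrightarrow> g \<in> Hom C a b \<Longrightarrow> h \<in> Hom C a b \<Longrightarrow>
  addm C (addm C f g) h = addm C f (addm C g h)"
  using pa unfolding is_preadditive_def by blast
lemma add_comm: "a \<in> Obj C \<Longrightarrow> b \<in> Obj C \<Longrightarrow> f \<in> Hom C a b \<Longrightarrow> g \<in> Hom C a b \<Longrightarrow> addm C f g = addm C g f"
  using pa unfolding is_preadditive_def by blast
lemma add_zero: "a \<in> Obj C \<Longrightarrow> b \<in> Obj C \<Longrightarrow> f \<in> Hom C a b \<Longrightarrow> addm C f (zerom C a b) = f"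
  using pa unfolding is_preadditive_def by blast
lemma zero_add: "a \<in> Obj C \<Longrightarrow> b \<in> Obj C \<Longrightarrow> f \<in> Hom C a b \<Longrightarrow> addm C (zerom C a b) f = f"
  using add_zero add_comm zero_hom by metis
lemma add_neg: "a \<in> Obj C \<Longrightarrow> b \<in> Obj C \<Longrightarrow> f \<in> Hom C a b \<Longrightarrow> addm C f (negm C f) = zerom C a b"
  using pa unfolding is_preadditive_def by blast
lemma distl: "a \<in> Obj C \<Longrightarrow> b \<in> Obj C \<Longrightarrow> c \<in> Obj C \<Longrightarrow> f \<in> Hom C a b \<Longrightarrow> f' \<in> Hom C a b \<Longrightarrow> g \<in> Hom C b c \<Longrightarrow>
   cmp C g (addm C f f') = addm C (cmp C g f) (cmp C g f')"
  using pa unfolding is_preadditive_def by blast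
lemma distr: "a \<in> Obj C \<Longrightarrow> b \<in> Obj C \<Longrightarrow> c \<in> Obj C \<Longrightarrow> f \<in> Hom C a b \<Longrightarrow> g \<in> Hom C b c \<Longrightarrow> g' \<in> Hom C b c \<Longrightarrow>
   cmp C (addm C g g') f = addm C (cmp C g f) (cmp C g' f)"
  using pa unfolding is_preadditive_def by blast

lemma idem_zero: assumes "a \<in> Obj C" "b \<in> Obj C" "x \<in> Hom C a b" "addm C x x = x"
  shows "x = zerom C a b"
proof -
  have "x = addm C x (addm C x (negm C x))" using assms add_neg add_zero by metis
  also have "\<dots> = addm C (addm C x x) (negm C x)" using assms add_assoc neg_hom by metis
  also have "\<dots> = zerom C a b" using assms add_neg by metis
  finally show ?thesis .
qed

lemma neg_unique: assumes "a \<in> Obj C" "b \<in> Obj C" "x \<in> Hom C a b" "y \<in> Hom C a b" "addm C x y = zerom C a b"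
  shows "y = negm C x"
proof -
  have "y = addm C (addm C (negm C x) x) y" using assms add_neg add_comm zero_add neg_hom by metis
  also have "\<dots> = addm C (negm C x) (addm C x y)" using assms add_assoc neg_hom by metis
  also have "\<dots> = negm C x" using assms add_zero neg_hom by metis
  finally show ?thesis .
qed

lemma comp_zero_r: assumes "a \<in> Obj C" "b \<in> Obj C" "c \<in> Obj C" "g \<in> Hom C b c"
  shows "cmp C g (zerom C a b) = zerom C a c"
proof -
  have "cmp C g (zerom C a b) = cmp C g (addm C (zerom C a b) (zerom C a b))" using assms add_zero zero_hom by metis
  also have "\<dots> = addm C (cmp C g (zerom C a b)) (cmp C g (zerom C a b))" using assms distl zero_hom by metis
  finally show ?thesis using idem_zero assms comp_hom zero_hom by metis
qed

lemma comp_zero_l: assumes "a \<in> Obj C" "b \<in> Obj C" "c \<in> Obj C" "f \<in> Hom C a b"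
  shows "cmp C (zerom C b c) f = zerom C a c"
proof -
  have "cmp C (zerom C b c) f = cmp C (addm C (zerom C b c) (zerom C b c)) f" using assms add_zero zero_hom by metis
  also have "\<dots> = addm C (cmp C (zerom C b c) f) (cmp C (zerom C b c) f)" using assms distr zero_hom by metis
  finally show ?thesis using idem_zero assms comp_hom zero_hom by metis
qed

lemma comp_neg_r: assumes "a \<in> Obj C" "b \<in> Obj C" "c \<in> Obj C" "f \<in> Hom C a b" "g \<in> Hom C b c"
  shows "cmp C g (negm C f) = negm C (cmp C g f)"
proof -
  have "addm C (cmp C g f) (cmp C g (negm C f)) = zerom C a c"
    using assms distl[of a b c f "negm C f" g] add_neg comp_zero_r neg_hom by metis
  thus ?thesis using neg_unique assms comp_hom neg_hom by metis
qed

end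

lemma functor_zero:
  assumes F: "additive_functor C D G0 G1" and a: "a \<in> Obj C" and b: "b \<in> Obj C"
  shows "G1 (zerom C a b) = zerom D (G0 a) (G0 b)"
proof -
  have pC: "is_preadditive C" and pD: "is_preadditive D" using F unfolding additive_functor_def is_additive_category_def by auto
  have o: "G0 a \<in> Obj D" "G0 b \<in> Obj D" using F a b unfolding additive_functor_def by auto
  have h: "G1 (zerom C a b) \<in> Hom D (G0 a) (G0 b)" using F a b zero_hom[OF pC] unfolding additive_functor_def by blast
  have "G1 (zerom C a b) = G1 (addm C (zerom C a b) (zerom C a b))" using add_zero[OF pC] zero_hom[OF pC] a b by metis
  also have "\<dots> = addm D (G1 (zerom C a b)) (G1 (zerom C a b))" using F a b zero_hom[OF pC] unfolding additive_functor_def by blast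
  finally show ?thesis using idem_zero[OF pD o h] by simp
qed



lemma comp_hom2: "is_preadditive C \<Longrightarrow> g \<in> Hom C b c \<Longrightarrow> f \<in> Hom C a b \<Longrightarrow> a \<in> Obj C \<Longrightarrow> b \<in> Obj C \<Longrightarrow> c \<in> Obj C \<Longrightarrow> cmp C g f \<in> Hom C a c"
  by (rule comp_hom)
lemma add_hom2: "is_preadditive C \<Longrightarrow> f \<in> Hom C a b \<Longrightarrow> g \<in> Hom C a b \<Longrightarrow> a \<in> Obj C \<Longrightarrow> b \<in> Obj C \<Longrightarrow> addm C f g \<in> Hom C a b"
  by (rule add_hom)
lemma neg_hom2: "is_preadditive C \<Longrightarrow> f \<in> Hom C a b \<Longrightarrow> a \<in> Obj C \<Longrightarrow> b \<in> Obj C \<Longrightarrow> negm C f \<in> Hom C a b"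
  by (rule neg_hom)
lemma assoc2: "is_preadditive C \<Longrightarrow> h \<in> Hom C c d \<Longrightarrow> g \<in> Hom C b c \<Longrightarrow> f \<in> Hom C a b \<Longrightarrow> a \<in> Obj C \<Longrightarrow> b \<in> Obj C \<Longrightarrow> c \<in> Obj C \<Longrightarrow> d \<in> Obj C \<Longrightarrow> 
   cmp C (cmp C h g) f = cmp C h (cmp C g f)"
  by (rule assoc[symmetric])
lemma cancel: "is_preadditive C \<Longrightarrow> cmp C R S = ident C b \<Longrightarrow> R \<in> Hom C a b \<Longrightarrow> S \<in> Hom C b a \<Longrightarrow> k \<in> Hom C y b \<Longrightarrow>
   a \<in> Obj C \<Longrightarrow> b \<in> Obj C \<Longrightarrow> y \<in> Obj C \<Longrightarrow> cmp C R (cmp C S k) = k"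
  by (subst assoc2[symmetric], assumption+, simp, rule idl, assumption+)

lemmas HT = comp_hom2 add_hom2 neg_hom2 zero_hom id_hom

lemma LD:
  assumes pD: "is_preadditive D"
    and Ob: "X \<in> Obj D" "A0 \<in> Obj D" "A1 \<in> Obj D" "A2 \<in> Obj D" "B0 \<in> Obj D" "B1 \<in> Obj D" "B2 \<in> Obj D"
    and Ty: "F \<in> Hom D B0 B1" "Gg \<in> Hom D B1 B2" "S0 \<in> Hom D B0 A0" "S1 \<in> Hom D B1 A1" "S2 \<in> Hom D B2 A2"
      "R0 \<in> Hom D A0 B0" "R1 \<in> Hom D A1 B1" "R2 \<in> Hom D A2 B2" "Phi \<in> Hom D X A1"
      "I1 \<in> Hom D A0 X" "I2 \<in> Hom D A1 X" "P1 \<in> Hom D X A0" "P2 \<in> Hom D X A1" "U \<in> Hom D A1 A1"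
    and rs0: "cmp D R0 S0 = ident D B0" and rs1: "cmp D R1 S1 = ident D B1" and rs2: "cmp D R2 S2 = ident D B2"
    and split: "addm D (cmp D I1 P1) (cmp D I2 P2) = ident D X"
    and phi1: "cmp D Phi I1 = cmp D S1 (cmp D F R0)" and phi2: "cmp D Phi I2 = U"
    and r1u: "cmp D R1 U = zerom D A1 B1" and su: "addm D (cmp D S1 R1) U = ident D A1"
  shows "exact_at D B0 B1 B2 F Gg \<longleftrightarrow> exact_at D X A1 A2 Phi (cmp D S2 (cmp D Gg R1))"
proof -
  define Psi where "Psi = cmp D S2 (cmp D Gg R1)"
  have TPsi: "Psi \<in> Hom D A1 A2" unfolding Psi_def by (rule Ty Ob HT[OF pD])+
  note TT = Ty TPsi
  have psi_s1: "cmp D Psi (cmp D S1 k) = cmp D S2 (cmp D Gg k)" if k: "k \<in> Hom D Y B1" "Y \<in> Obj D" for k Y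
  proof -
    have "cmp D Psi (cmp D S1 k) = cmp D S2 (cmp D (cmp D Gg R1) (cmp D S1 k))"
      unfolding Psi_def by (rule assoc2[OF pD], (rule k TT Ob HT[OF pD])+)
    also have "\<dots> = cmp D S2 (cmp D Gg (cmp D R1 (cmp D S1 k)))"
      by (subst assoc2[OF pD], (rule k TT Ob HT[OF pD])+, rule refl)
    also have "\<dots> = cmp D S2 (cmp D Gg k)"
      by (subst cancel[OF pD rs1], (rule k TT Ob HT[OF pD])+, rule refl)
    finally show ?thesis .
  qed
  have psi_h: "cmp D Psi h = cmp D S2 (cmp D Gg (cmp D R1 h))" if k: "h \<in> Hom D Y A1" "Y \<in> Obj D" for h Y
  proof -
    have "cmp D Psi h = cmp D S2 (cmp D (cmp D Gg R1) h)"
      unfolding Psi_def by (rule assoc2[OF pD], (rule k TT Ob HT[OF pD])+)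
    also have "\<dots> = cmp D S2 (cmp D Gg (cmp D R1 h))"
      by (subst assoc2[OF pD], (rule k TT Ob HT[OF pD])+, rule refl)
    finally show ?thesis .
  qed
  have phi_dec: "cmp D Phi k = addm D (cmp D S1 (cmp D F (cmp D R0 (cmp D P1 k)))) (cmp D U (cmp D P2 k))"
    if k: "k \<in> Hom D Y X" "Y \<in> Obj D" for k Y
  proof -
    have "cmp D Phi k = cmp D Phi (cmp D (addm D (cmp D I1 P1) (cmp D I2 P2)) k)"
      unfolding split by (subst idl[OF pD], (rule k TT Ob HT[OF pD])+, rule refl)
    also have "\<dots> = cmp D Phi (addm D (cmp D (cmp D I1 P1) k) (cmp D (cmp D I2 P2) k))"
      by (subst distr[OF pD], (rule k TT Ob HT[OF pD])+, rule refl)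
    also have "\<dots> = cmp D Phi (addm D (cmp D I1 (cmp D P1 k)) (cmp D I2 (cmp D P2 k)))"
      by (subst assoc2[OF pD], (rule k TT Ob HT[OF pD])+, subst assoc2[OF pD], (rule k TT Ob HT[OF pD])+, rule refl)
    also have "\<dots> = addm D (cmp D Phi (cmp D I1 (cmp D P1 k))) (cmp D Phi (cmp D I2 (cmp D P2 k)))"
      by (rule distl[OF pD], (rule k TT Ob HT[OF pD])+)
    also have "\<dots> = addm D (cmp D (cmp D Phi I1) (cmp D P1 k)) (cmp D (cmp D Phi I2) (cmp D P2 k))"
      by (subst assoc2[OF pD], (rule k TT Ob HT[OF pD])+, subst assoc2[OF pD], (rule k TT Ob HT[OF pD])+, rule refl)
    also have "\<dots> = addm D (cmp D (cmp D S1 (cmp D F R0)) (cmp D P1 k)) (cmp D U (cmp D P2 k))"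
      unfolding phi1 phi2 ..
    also have "\<dots> = addm D (cmp D S1 (cmp D F (cmp D R0 (cmp D P1 k)))) (cmp D U (cmp D P2 k))"
      by (subst assoc2[OF pD], (rule k TT Ob HT[OF pD])+, subst assoc2[OF pD], (rule k TT Ob HT[OF pD])+, rule refl)
    finally show ?thesis .
  qed
  show ?thesis unfolding Psi_def[symmetric]
  proof
    assume E: "exact_at D B0 B1 B2 F Gg"
    then have gf: "cmp D Gg F = zerom D B0 B2" unfolding exact_at_def by blast
    have "cmp D Psi Phi = cmp D Psi (cmp D Phi (ident D X))"
      by (subst idr[OF pD], (rule TT Ob HT[OF pD])+, rule refl)
    also have "\<dots> = addm D (cmp D Psi (cmp D S1 (cmp D F (cmp D R0 (cmp D P1 (ident D X))))))
          (cmp D Psi (cmp D U (cmp D P2 (ident D X))))"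
      by (subst phi_dec, (rule TT Ob HT[OF pD])+, rule distl[OF pD], (rule TT Ob HT[OF pD])+)
    also have "cmp D Psi (cmp D S1 (cmp D F (cmp D R0 (cmp D P1 (ident D X))))) = zerom D X A2"
    proof -
      have "cmp D Psi (cmp D S1 (cmp D F (cmp D R0 (cmp D P1 (ident D X)))))
         = cmp D S2 (cmp D Gg (cmp D F (cmp D R0 (cmp D P1 (ident D X)))))"
        by (rule psi_s1, (rule TT Ob HT[OF pD])+)
      also have "\<dots> = cmp D S2 (cmp D (cmp D Gg F) (cmp D R0 (cmp D P1 (ident D X))))"
        by (subst assoc2[OF pD], (rule TT Ob HT[OF pD])+, rule refl)
      also have "\<dots> = zerom D X A2" unfolding gf
        by (subst comp_zero_l[OF pD], (rule TT Ob HT[OF pD])+, rule comp_zero_r[OF pD], (rule TT Ob HT[OF pD])+)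
      finally show ?thesis .
    qed
    also have "cmp D Psi (cmp D U (cmp D P2 (ident D X))) = zerom D X A2"
    proof -
      have "cmp D Psi (cmp D U (cmp D P2 (ident D X))) = cmp D S2 (cmp D Gg (cmp D R1 (cmp D U (cmp D P2 (ident D X)))))"
        by (rule psi_h, (rule TT Ob HT[OF pD])+)
      also have "\<dots> = cmp D S2 (cmp D Gg (cmp D (cmp D R1 U) (cmp D P2 (ident D X))))"
        by (subst assoc2[OF pD], (rule TT Ob HT[OF pD])+, rule refl)
      also have "\<dots> = zerom D X A2" unfolding r1u
        by (subst comp_zero_l[OF pD], (rule TT Ob HT[OF pD])+, subst comp_zero_r[OF pD], (rule TT Ob HT[OF pD])+, rule comp_zero_r[OF pD], (rule TT Ob HT[OF pD])+)
      finally show ?thesis .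
    qed
    finally have pp0: "cmp D Psi Phi = addm D (zerom D X A2) (zerom D X A2)" .
    have zz: "addm D (zerom D X A2) (zerom D X A2) = zerom D X A2"
      by (rule add_zero[OF pD], (rule TT Ob HT[OF pD])+)
    have pp: "cmp D Psi Phi = zerom D X A2" using pp0 zz by simp
    show "exact_at D X A1 A2 Phi Psi"
      unfolding exact_at_def
    proof (intro conjI ballI impI Ob TT pp)
      fix Y h assume Y: "Y \<in> Obj D" and h: "h \<in> Hom D Y A1" and ph: "cmp D Psi h = zerom D Y A2"
      have c1: "cmp D Gg (cmp D R1 h) = cmp D R2 (cmp D S2 (cmp D Gg (cmp D R1 h)))"
        by (rule cancel[OF pD rs2, symmetric], (rule h Y TT Ob HT[OF pD])+)
      have e: "cmp D S2 (cmp D Gg (cmp D R1 h)) = zerom D Y A2" using psi_h[OF h Y] ph by simp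
      have c2: "cmp D R2 (cmp D S2 (cmp D Gg (cmp D R1 h))) = zerom D Y B2"
        unfolding e by (rule comp_zero_r[OF pD], (rule h Y TT Ob HT[OF pD])+)
      have "cmp D Gg (cmp D R1 h) = zerom D Y B2" using c1 c2 by simp
      moreover have "cmp D R1 h \<in> Hom D Y B1" by (rule h Y TT Ob HT[OF pD])+
      moreover have "\<forall>a\<in>Obj D. \<forall>h\<in>Hom D a B1. cmp D Gg h = zerom D a B2 \<longrightarrow>
        (\<exists>h'\<in>Hom D a B0. h = cmp D F h')" using E unfolding exact_at_def by blast
      ultimately obtain k where k: "k \<in> Hom D Y B0" and rk: "cmp D R1 h = cmp D F k"
        using Y by blast
      show "\<exists>h'\<in>Hom D Y X. h = cmp D Phi h'"
      proof (intro bexI)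
        show "addm D (cmp D I1 (cmp D S0 k)) (cmp D I2 h) \<in> Hom D Y X" by (rule k h Y TT Ob HT[OF pD])+
        have "cmp D Phi (addm D (cmp D I1 (cmp D S0 k)) (cmp D I2 h))
           = addm D (cmp D Phi (cmp D I1 (cmp D S0 k))) (cmp D Phi (cmp D I2 h))"
          by (rule distl[OF pD], (rule k h Y TT Ob HT[OF pD])+)
        also have "\<dots> = addm D (cmp D (cmp D Phi I1) (cmp D S0 k)) (cmp D (cmp D Phi I2) h)"
          by (subst assoc2[OF pD], (rule k h Y TT Ob HT[OF pD])+, subst assoc2[OF pD], (rule k h Y TT Ob HT[OF pD])+, rule refl)
        also have "\<dots> = addm D (cmp D (cmp D S1 (cmp D F R0)) (cmp D S0 k)) (cmp D U h)"
          unfolding phi1 phi2 ..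
        also have "\<dots> = addm D (cmp D S1 (cmp D F (cmp D R0 (cmp D S0 k)))) (cmp D U h)"
          by (subst assoc2[OF pD], (rule k h Y TT Ob HT[OF pD])+, subst assoc2[OF pD], (rule k h Y TT Ob HT[OF pD])+, rule refl)
        also have "\<dots> = addm D (cmp D S1 (cmp D R1 h)) (cmp D U h)"
          by (subst cancel[OF pD rs0], (rule k h Y TT Ob HT[OF pD])+, simp add: rk)
        also have "\<dots> = addm D (cmp D (cmp D S1 R1) h) (cmp D U h)"
          by (subst assoc2[OF pD], (rule k h Y TT Ob HT[OF pD])+, rule refl)
        also have "\<dots> = cmp D (addm D (cmp D S1 R1) U) h"
          by (rule distr[OF pD, symmetric], (rule k h Y TT Ob HT[OF pD])+)
        also have "\<dots> = h" unfolding su by (rule idl[OF pD], (rule k h Y TT Ob HT[OF pD])+)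
        finally show "h = cmp D Phi (addm D (cmp D I1 (cmp D S0 k)) (cmp D I2 h))" ..
      qed
    qed
  next
    assume E: "exact_at D X A1 A2 Phi Psi"
    then have pp: "cmp D Psi Phi = zerom D X A2" unfolding exact_at_def by blast
    have key1: "cmp D Phi (cmp D I1 S0) = cmp D S1 F"
    proof -
      have "cmp D Phi (cmp D I1 S0) = cmp D (cmp D Phi I1) S0"
        by (rule assoc2[OF pD, symmetric], (rule TT Ob HT[OF pD])+)
      also have "\<dots> = cmp D S1 (cmp D F (cmp D R0 S0))" unfolding phi1
        by (subst assoc2[OF pD], (rule TT Ob HT[OF pD])+, subst assoc2[OF pD], (rule TT Ob HT[OF pD])+, rule refl)
      also have "\<dots> = cmp D S1 F" unfolding rs0 by (subst idr[OF pD], (rule TT Ob HT[OF pD])+, rule refl)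
      finally show ?thesis .
    qed
    have "cmp D S2 (cmp D Gg F) = cmp D Psi (cmp D S1 F)"
      by (rule psi_s1[symmetric], (rule TT Ob HT[OF pD])+)
    also have "\<dots> = cmp D (cmp D Psi Phi) (cmp D I1 S0)" unfolding key1[symmetric]
      by (rule assoc2[OF pD, symmetric], (rule TT Ob HT[OF pD])+)
    also have "\<dots> = zerom D B0 A2" unfolding pp
      by (rule comp_zero_l[OF pD], (rule TT Ob HT[OF pD])+)
    finally have sgf: "cmp D S2 (cmp D Gg F) = zerom D B0 A2" .
    have gf: "cmp D Gg F = zerom D B0 B2"
    proof -
      have "cmp D Gg F = cmp D R2 (cmp D S2 (cmp D Gg F))"
        by (rule cancel[OF pD rs2, symmetric], (rule TT Ob HT[OF pD])+)
      also have "\<dots> = zerom D B0 B2" unfolding sgf by (rule comp_zero_r[OF pD], (rule TT Ob HT[OF pD])+)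
      finally show ?thesis .
    qed
    show "exact_at D B0 B1 B2 F Gg"
      unfolding exact_at_def
    proof (intro conjI ballI impI Ob TT gf)
      fix Y h assume Y: "Y \<in> Obj D" and h: "h \<in> Hom D Y B1" and gh: "cmp D Gg h = zerom D Y B2"
      have e1: "cmp D Psi (cmp D S1 h) = cmp D S2 (zerom D Y B2)"
        using psi_s1[OF h Y] gh by simp
      have e2: "cmp D S2 (zerom D Y B2) = zerom D Y A2"
        by (rule comp_zero_r[OF pD], (rule h Y TT Ob HT[OF pD])+)
      have "cmp D Psi (cmp D S1 h) = zerom D Y A2" using e1 e2 by simp
      moreover have "cmp D S1 h \<in> Hom D Y A1" by (rule h Y TT Ob HT[OF pD])+
      moreover have "\<forall>a\<in>Obj D. \<forall>h\<in>Hom D a A1. cmp D Psi h = zerom D a A2 \<longrightarrow>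
        (\<exists>h'\<in>Hom D a X. h = cmp D Phi h')" using E unfolding exact_at_def by blast
      ultimately obtain k where k: "k \<in> Hom D Y X" and sk: "cmp D S1 h = cmp D Phi k"
        using Y by blast
      show "\<exists>h'\<in>Hom D Y B0. h = cmp D F h'"
      proof (intro bexI)
        show "cmp D R0 (cmp D P1 k) \<in> Hom D Y B0" by (rule k h Y TT Ob HT[OF pD])+
        have "h = cmp D R1 (cmp D S1 h)"
          by (rule cancel[OF pD rs1, symmetric], (rule k h Y TT Ob HT[OF pD])+)
        also have "\<dots> = cmp D R1 (addm D (cmp D S1 (cmp D F (cmp D R0 (cmp D P1 k)))) (cmp D U (cmp D P2 k)))"
          unfolding sk phi_dec[OF k Y] ..
        also have "\<dots> = addm D (cmp D R1 (cmp D S1 (cmp D F (cmp D R0 (cmp D P1 k))))) (cmp D R1 (cmp D U (cmp D P2 k)))"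
          by (rule distl[OF pD], (rule k h Y TT Ob HT[OF pD])+)
        also have "\<dots> = addm D (cmp D F (cmp D R0 (cmp D P1 k))) (cmp D (cmp D R1 U) (cmp D P2 k))"
          by (subst cancel[OF pD rs1], (rule k h Y TT Ob HT[OF pD])+, subst assoc2[OF pD], (rule k h Y TT Ob HT[OF pD])+, rule refl)
        also have "\<dots> = cmp D F (cmp D R0 (cmp D P1 k))" unfolding r1u
          by (subst comp_zero_l[OF pD], (rule k h Y TT Ob HT[OF pD])+, rule add_zero[OF pD], (rule k h Y TT Ob HT[OF pD])+)
        finally show "h = cmp D F (cmp D R0 (cmp D P1 k))" .
      qed
    qed
  qed
qed



lemma LG:
  assumes G: "additive_functor C D G0 G1"
    and Ob: "X \<in> Obj C" "A0 \<in> Obj C" "A1 \<in> Obj C" "A2 \<in> Obj C" "B0 \<in> Obj C" "B1 \<in> Obj C" "B2 \<in> Obj C"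
    and Ty: "F \<in> Hom C B0 B1" "Gg \<in> Hom C B1 B2" "S0 \<in> Hom C B0 A0" "S1 \<in> Hom C B1 A1" "S2 \<in> Hom C B2 A2"
      "R0 \<in> Hom C A0 B0" "R1 \<in> Hom C A1 B1" "R2 \<in> Hom C A2 B2" "Phi \<in> Hom C X A1"
      "I1 \<in> Hom C A0 X" "I2 \<in> Hom C A1 X" "P1 \<in> Hom C X A0" "P2 \<in> Hom C X A1" "U \<in> Hom C A1 A1"
    and rs0: "cmp C R0 S0 = ident C B0" and rs1: "cmp C R1 S1 = ident C B1" and rs2: "cmp C R2 S2 = ident C B2"
    and split: "addm C (cmp C I1 P1) (cmp C I2 P2) = ident C X"
    and phi1: "cmp C Phi I1 = cmp C S1 (cmp C F R0)" and phi2: "cmp C Phi I2 = U"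
    and r1u: "cmp C R1 U = zerom C A1 B1" and su: "addm C (cmp C S1 R1) U = ident C A1"
  shows "exact_at D (G0 B0) (G0 B1) (G0 B2) (G1 F) (G1 Gg) \<longleftrightarrow>
         exact_at D (G0 X) (G0 A1) (G0 A2) (G1 Phi) (G1 (cmp C S2 (cmp C Gg R1)))"
proof -
  have pC: "is_preadditive C" and pD: "is_preadditive D"
    using G unfolding additive_functor_def is_additive_category_def by auto
  have Fo: "\<And>a. a \<in> Obj C \<Longrightarrow> G0 a \<in> Obj D" using G unfolding additive_functor_def by blast
  have Fh: "\<And>a b f. f \<in> Hom C a b \<Longrightarrow> a \<in> Obj C \<Longrightarrow> b \<in> Obj C \<Longrightarrow> G1 f \<in> Hom D (G0 a) (G0 b)"
    using G unfolding additive_functor_def by blast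
  have Fc: "\<And>a b c f g. g \<in> Hom C b c \<Longrightarrow> f \<in> Hom C a b \<Longrightarrow> a \<in> Obj C \<Longrightarrow> b \<in> Obj C \<Longrightarrow> c \<in> Obj C \<Longrightarrow>
     G1 (cmp C g f) = cmp D (G1 g) (G1 f)"
    using G unfolding additive_functor_def by blast
  have Fid: "\<And>a. a \<in> Obj C \<Longrightarrow> G1 (ident C a) = ident D (G0 a)"
    using G unfolding additive_functor_def by blast
  have Fa: "\<And>a b f g. f \<in> Hom C a b \<Longrightarrow> g \<in> Hom C a b \<Longrightarrow> a \<in> Obj C \<Longrightarrow> b \<in> Obj C \<Longrightarrow>
     G1 (addm C f g) = addm D (G1 f) (G1 g)"
    using G unfolding additive_functor_def by blast
  note Fz = functor_zero[OF G]
  have ObD: "G0 X \<in> Obj D" "G0 A0 \<in> Obj D" "G0 A1 \<in> Obj D" "G0 A2 \<in> Obj D" "G0 B0 \<in> Obj D" "G0 B1 \<in> Obj D" "G0 B2 \<in> Obj D"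
    by (rule Fo, rule Ob)+
  have TyD: "G1 F \<in> Hom D (G0 B0) (G0 B1)" "G1 Gg \<in> Hom D (G0 B1) (G0 B2)" "G1 S0 \<in> Hom D (G0 B0) (G0 A0)"
     "G1 S1 \<in> Hom D (G0 B1) (G0 A1)" "G1 S2 \<in> Hom D (G0 B2) (G0 A2)"
      "G1 R0 \<in> Hom D (G0 A0) (G0 B0)" "G1 R1 \<in> Hom D (G0 A1) (G0 B1)" "G1 R2 \<in> Hom D (G0 A2) (G0 B2)" "G1 Phi \<in> Hom D (G0 X) (G0 A1)"
      "G1 I1 \<in> Hom D (G0 A0) (G0 X)" "G1 I2 \<in> Hom D (G0 A1) (G0 X)" "G1 P1 \<in> Hom D (G0 X) (G0 A0)" "G1 P2 \<in> Hom D (G0 X) (G0 A1)" "G1 U \<in> Hom D (G0 A1) (G0 A1)"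
    by (rule Fh, rule Ty, rule Ob, rule Ob)+
  have c1: "cmp D (G1 R0) (G1 S0) = ident D (G0 B0)"
    by (subst Fc[symmetric], (rule Ty Ob)+, simp add: rs0 Fid Ob)
  have c2: "cmp D (G1 R1) (G1 S1) = ident D (G0 B1)"
    by (subst Fc[symmetric], (rule Ty Ob)+, simp add: rs1 Fid Ob)
  have c3: "cmp D (G1 R2) (G1 S2) = ident D (G0 B2)"
    by (subst Fc[symmetric], (rule Ty Ob)+, simp add: rs2 Fid Ob)
  have c4: "addm D (cmp D (G1 I1) (G1 P1)) (cmp D (G1 I2) (G1 P2)) = ident D (G0 X)"
    by (subst Fc[symmetric], (rule Ty Ob)+, subst Fc[symmetric], (rule Ty Ob)+,
        subst Fa[symmetric], (rule Ty Ob HT[OF pC])+, simp add: split Fid Ob)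
  have c5: "cmp D (G1 Phi) (G1 I1) = cmp D (G1 S1) (cmp D (G1 F) (G1 R0))"
    by (subst Fc[symmetric], (rule Ty Ob)+, subst Fc[symmetric], (rule Ty Ob)+,
        subst Fc[symmetric], (rule Ty Ob HT[OF pC])+, simp add: phi1)
  have c6: "cmp D (G1 Phi) (G1 I2) = G1 U"
    by (subst Fc[symmetric], (rule Ty Ob)+, simp add: phi2)
  have c7: "cmp D (G1 R1) (G1 U) = zerom D (G0 A1) (G0 B1)"
    by (subst Fc[symmetric], (rule Ty Ob)+, simp add: r1u Fz Ob)
  have c8: "addm D (cmp D (G1 S1) (G1 R1)) (G1 U) = ident D (G0 A1)"
    by (subst Fc[symmetric], (rule Ty Ob)+, subst Fa[symmetric], (rule Ty Ob HT[OF pC])+, simp add: su Fid Ob)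
  have e: "G1 (cmp C S2 (cmp C Gg R1)) = cmp D (G1 S2) (cmp D (G1 Gg) (G1 R1))"
    by (subst Fc, (rule Ty Ob HT[OF pC])+, subst Fc, (rule Ty Ob HT[OF pC])+, rule refl)
  show ?thesis unfolding e
    by (rule LD[OF pD ObD TyD c1 c2 c3 c4 c5 c6 c7 c8])
qed

lemma id_functor: "is_additive_category C \<Longrightarrow> additive_functor C C (\<lambda>x. x) (\<lambda>f. f)"
  unfolding additive_functor_def by simp

lemma P1:
  assumes fs: "full_additive_subcat A A'" and cf: "cofinal A A'"
    and Ob: "a0 \<in> Obj A" "a1 \<in> Obj A" "a2 \<in> Obj A" and Ty: "f \<in> Hom A a0 a1" "g \<in> Hom A a1 a2"
  shows "exact_at A a0 a1 a2 f g \<longleftrightarrow> exact_at A' a0 a1 a2 f g"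
proof -
  have pA: "is_preadditive A'" using fs unfolding full_additive_subcat_def is_additive_category_def by blast
  have sub: "Obj A \<subseteq> Obj A'" using fs unfolding full_additive_subcat_def by blast
  have hom: "\<And>a b. a \<in> Obj A \<Longrightarrow> b \<in> Obj A \<Longrightarrow> Hom A a b = Hom A' a b"
    using fs unfolding full_additive_subcat_def by blast
  have cm: "\<And>a b c f g. a \<in> Obj A \<Longrightarrow> b \<in> Obj A \<Longrightarrow> c \<in> Obj A \<Longrightarrow> f \<in> Hom A a b \<Longrightarrow> g \<in> Hom A b c \<Longrightarrow> cmp A g f = cmp A' g f"
    using fs unfolding full_additive_subcat_def by blast
  have zz: "\<And>a b. a \<in> Obj A \<Longrightarrow> b \<in> Obj A \<Longrightarrow> zerom A a b = zerom A' a b"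
    using fs unfolding full_additive_subcat_def by blast
  have Ob': "a0 \<in> Obj A'" "a1 \<in> Obj A'" "a2 \<in> Obj A'" using Ob sub by auto
  have Ty': "f \<in> Hom A' a0 a1" "g \<in> Hom A' a1 a2" using Ty hom Ob by auto
  have gf: "cmp A g f = cmp A' g f" using cm Ob Ty by blast
  have z: "zerom A a0 a2 = zerom A' a0 a2" using zz Ob by blast
  show ?thesis
  proof
    assume E: "exact_at A a0 a1 a2 f g"
    have ker: "\<forall>a\<in>Obj A. \<forall>h\<in>Hom A a a1. cmp A g h = zerom A a a2 \<longrightarrow> (\<exists>h'\<in>Hom A a a0. h = cmp A f h')"
      using E unfolding exact_at_def by blast
    show "exact_at A' a0 a1 a2 f g" unfolding exact_at_def
    proof (intro conjI ballI impI Ob' Ty')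
      show "cmp A' g f = zerom A' a0 a2" using E gf z unfolding exact_at_def by simp
      fix Y' h assume Y': "Y' \<in> Obj A'" and h: "h \<in> Hom A' Y' a1" and gh: "cmp A' g h = zerom A' Y' a2"
      obtain Y s r where Y: "Y \<in> Obj A" and s: "s \<in> Hom A' Y' Y" and r: "r \<in> Hom A' Y Y'" and rs: "cmp A' r s = ident A' Y'"
        using cf Y' unfolding cofinal_def by blast
      have YA: "Y \<in> Obj A'" using Y sub by auto
      have hr: "cmp A' h r \<in> Hom A Y a1" unfolding hom[OF Y Ob(2)] by (rule h r s Y' YA Ob' Ty' HT[OF pA])+
      have "cmp A g (cmp A' h r) = cmp A' g (cmp A' h r)" using cm Y Ob Ty hr by blast
      also have "\<dots> = cmp A' (cmp A' g h) r" by (rule assoc[OF pA], (rule h r s Y' YA Ob' Ty' HT[OF pA])+)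
      also have "\<dots> = zerom A' Y a2" unfolding gh by (rule comp_zero_l[OF pA], (rule h r s Y' YA Ob' Ty' HT[OF pA])+)
      also have "\<dots> = zerom A Y a2" using zz Y Ob by simp
      finally obtain k where k: "k \<in> Hom A Y a0" and hk: "cmp A' h r = cmp A f k" using ker Y hr by blast
      have k': "k \<in> Hom A' Y a0" using k hom Y Ob by auto
      have hk': "cmp A' h r = cmp A' f k" using hk cm Y Ob Ty k by metis
      show "\<exists>h'\<in>Hom A' Y' a0. h = cmp A' f h'"
      proof (intro bexI)
        show "cmp A' k s \<in> Hom A' Y' a0" by (rule k' h r s Y' YA Ob' Ty' HT[OF pA])+
        have "h = cmp A' h (cmp A' r s)" unfolding rs by (rule idr[OF pA, symmetric], (rule k' h r s Y' YA Ob' Ty' HT[OF pA])+)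
        also have "\<dots> = cmp A' (cmp A' h r) s" by (rule assoc[OF pA], (rule k' h r s Y' YA Ob' Ty' HT[OF pA])+)
        also have "\<dots> = cmp A' f (cmp A' k s)" unfolding hk' by (rule assoc2[OF pA], (rule k' h r s Y' YA Ob' Ty' HT[OF pA])+)
        finally show "h = cmp A' f (cmp A' k s)" .
      qed
    qed
  next
    assume E: "exact_at A' a0 a1 a2 f g"
    show "exact_at A a0 a1 a2 f g" unfolding exact_at_def
    proof (intro conjI ballI impI Ob Ty)
      show "cmp A g f = zerom A a0 a2" using E gf z unfolding exact_at_def by simp
      fix Y h assume Y: "Y \<in> Obj A" and h: "h \<in> Hom A Y a1" and gh: "cmp A g h = zerom A Y a2"
      have h': "h \<in> Hom A' Y a1" using h hom Y Ob by auto
      have "cmp A' g h = zerom A' Y a2" using gh cm[of Y a1 a2 h g] zz Y Ob Ty h by simp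
      then obtain k where k: "k \<in> Hom A' Y a0" and hk: "h = cmp A' f k"
        using E Y sub h' unfolding exact_at_def by blast
      show "\<exists>h'\<in>Hom A Y a0. h = cmp A f h'"
      proof (rule bexI[of _ k])
        show k2: "k \<in> Hom A Y a0" using k hom[of Y a0] Y Ob by auto
        show "h = cmp A f k" using hk cm[of Y a0 a1 k f] Y Ob Ty k2 by auto
      qed
    qed
  qed
qed



lemma construct:
  fixes A :: "('o,'m,'x) addcat_scheme" and A' :: "('o,'m,'y) addcat_scheme"
  assumes fs: "full_additive_subcat A A'" and cf: "cofinal A A'" and G: "additive_functor A' D G0 G1"
    and Ob': "a0' \<in> Obj A'" "a1' \<in> Obj A'" "a2' \<in> Obj A'" and Ty': "f \<in> Hom A' a0' a1'" "g \<in> Hom A' a1' a2'"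
  shows "\<exists>c b1 b2 \<phi> \<psi>. c \<in> Obj A \<and> b1 \<in> Obj A \<and> b2 \<in> Obj A \<and> \<phi> \<in> Hom A c b1 \<and> \<psi> \<in> Hom A b1 b2 \<and>
    (exact_at A' a0' a1' a2' f g \<longleftrightarrow> exact_at A' c b1 b2 \<phi> \<psi>) \<and>
    (exact_at D (G0 a0') (G0 a1') (G0 a2') (G1 f) (G1 g) \<longleftrightarrow> exact_at D (G0 c) (G0 b1) (G0 b2) (G1 \<phi>) (G1 \<psi>))"
proof -
  have aA: "is_additive_category A" and aA': "is_additive_category A'" using fs unfolding full_additive_subcat_def by auto
  have pA: "is_preadditive A'" using aA' unfolding is_additive_category_def by blast
  have sub: "Obj A \<subseteq> Obj A'" using fs unfolding full_additive_subcat_def by blast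
  have hom: "\<And>a b. a \<in> Obj A \<Longrightarrow> b \<in> Obj A \<Longrightarrow> Hom A a b = Hom A' a b"
    using fs unfolding full_additive_subcat_def by blast
  have cm: "\<And>a b c f g. a \<in> Obj A \<Longrightarrow> b \<in> Obj A \<Longrightarrow> c \<in> Obj A \<Longrightarrow> f \<in> Hom A a b \<Longrightarrow> g \<in> Hom A b c \<Longrightarrow> cmp A g f = cmp A' g f"
    using fs unfolding full_additive_subcat_def by blast
  have zz: "\<And>a b. a \<in> Obj A \<Longrightarrow> b \<in> Obj A \<Longrightarrow> zerom A a b = zerom A' a b"
    using fs unfolding full_additive_subcat_def by blast
  have ii: "\<And>a. a \<in> Obj A \<Longrightarrow> ident A a = ident A' a"
    using fs unfolding full_additive_subcat_def by blast
  have ad: "\<And>a b f g. a \<in> Obj A \<Longrightarrow> b \<in> Obj A \<Longrightarrow> f \<in> Hom A a b \<Longrightarrow> g \<in> Hom A a b \<Longrightarrow> addm A f g = addm A' f g"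
    using fs unfolding full_additive_subcat_def by blast
  obtain b0 s0 r0 where b0: "b0 \<in> Obj A" and s0: "s0 \<in> Hom A' a0' b0" and r0: "r0 \<in> Hom A' b0 a0'" and rs0: "cmp A' r0 s0 = ident A' a0'"
    using cf Ob'(1) unfolding cofinal_def by blast
  obtain b1 s1 r1 where b1: "b1 \<in> Obj A" and s1: "s1 \<in> Hom A' a1' b1" and r1: "r1 \<in> Hom A' b1 a1'" and rs1: "cmp A' r1 s1 = ident A' a1'"
    using cf Ob'(2) unfolding cofinal_def by blast
  obtain b2 s2 r2 where b2: "b2 \<in> Obj A" and s2: "s2 \<in> Hom A' a2' b2" and r2: "r2 \<in> Hom A' b2 a2'" and rs2: "cmp A' r2 s2 = ident A' a2'"
    using cf Ob'(3) unfolding cofinal_def by blast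
  obtain c p1 p2 i1 i2 where c: "c \<in> Obj A" and p1: "p1 \<in> Hom A c b0" and p2: "p2 \<in> Hom A c b1"
    and i1: "i1 \<in> Hom A b0 c" and i2: "i2 \<in> Hom A b1 c"
    and e1: "cmp A p1 i1 = ident A b0" and e2: "cmp A p2 i2 = ident A b1"
    and e3: "cmp A p2 i1 = zerom A b0 b1" and e4: "cmp A p1 i2 = zerom A b1 b0"
    and e5: "addm A (cmp A i1 p1) (cmp A i2 p2) = ident A c"
    using aA b0 b1 unfolding is_additive_category_def by metis
  have pAA: "is_preadditive A" using aA unfolding is_additive_category_def by blast
  have Obb: "b0 \<in> Obj A'" "b1 \<in> Obj A'" "b2 \<in> Obj A'" "c \<in> Obj A'" using b0 b1 b2 c sub by auto
  have p1': "p1 \<in> Hom A' c b0" and p2': "p2 \<in> Hom A' c b1" and i1': "i1 \<in> Hom A' b0 c" and i2': "i2 \<in> Hom A' b1 c"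
    using p1 p2 i1 i2 hom b0 b1 c by auto
  have e1': "cmp A' p1 i1 = ident A' b0" using e1 cm[of b0 c b0 i1 p1] ii[of b0] b0 c p1 i1 by simp
  have e2': "cmp A' p2 i2 = ident A' b1" using e2 cm[of b1 c b1 i2 p2] ii[of b1] b1 c p2 i2 by simp
  have e3': "cmp A' p2 i1 = zerom A' b0 b1" using e3 cm[of b0 c b1 i1 p2] zz[of b0 b1] b0 b1 c p2 i1 by simp
  have e4': "cmp A' p1 i2 = zerom A' b1 b0" using e4 cm[of b1 c b0 i2 p1] zz[of b1 b0] b0 b1 c p1 i2 by simp
  have t1: "cmp A i1 p1 \<in> Hom A c c" by (rule p1 i1 b0 c HT[OF pAA])+
  have t2: "cmp A i2 p2 \<in> Hom A c c" by (rule p2 i2 b1 c HT[OF pAA])+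
  have e5': "addm A' (cmp A' i1 p1) (cmp A' i2 p2) = ident A' c"
    using e5 ad[OF c c t1 t2] cm[of c b0 c p1 i1] cm[of c b1 c p2 i2] ii[of c] b0 b1 c p1 p2 i1 i2 by simp
  note TT = Ob' Ty' Obb p1' p2' i1' i2' s0 s1 s2 r0 r1 r2
  define U where "U = addm A' (ident A' b1) (negm A' (cmp A' s1 r1))"
  define M where "M = cmp A' s1 (cmp A' f r0)"
  define Phi where "Phi = addm A' (cmp A' M p1) (cmp A' U p2)"
  have U: "U \<in> Hom A' b1 b1" unfolding U_def by (rule TT HT[OF pA])+
  have M: "M \<in> Hom A' b0 b1" unfolding M_def by (rule TT HT[OF pA])+
  have Phi: "Phi \<in> Hom A' c b1" unfolding Phi_def by (rule U M TT HT[OF pA])+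
  note TT2 = TT U M Phi
  have phi1: "cmp A' Phi i1 = M"
  proof -
    have "cmp A' Phi i1 = addm A' (cmp A' (cmp A' M p1) i1) (cmp A' (cmp A' U p2) i1)"
      unfolding Phi_def by (rule distr[OF pA], (rule TT2 HT[OF pA])+)
    also have "\<dots> = addm A' (cmp A' M (cmp A' p1 i1)) (cmp A' U (cmp A' p2 i1))"
      by (subst assoc2[OF pA], (rule TT2 HT[OF pA])+, subst assoc2[OF pA], (rule TT2 HT[OF pA])+, rule refl)
    also have "\<dots> = M" unfolding e1' e3'
      by (subst idr[OF pA], (rule TT2 HT[OF pA])+, subst comp_zero_r[OF pA], (rule TT2 HT[OF pA])+, rule add_zero[OF pA], (rule TT2 HT[OF pA])+)
    finally show ?thesis .
  qed
  have phi2: "cmp A' Phi i2 = U"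
  proof -
    have "cmp A' Phi i2 = addm A' (cmp A' (cmp A' M p1) i2) (cmp A' (cmp A' U p2) i2)"
      unfolding Phi_def by (rule distr[OF pA], (rule TT2 HT[OF pA])+)
    also have "\<dots> = addm A' (cmp A' M (cmp A' p1 i2)) (cmp A' U (cmp A' p2 i2))"
      by (subst assoc2[OF pA], (rule TT2 HT[OF pA])+, subst assoc2[OF pA], (rule TT2 HT[OF pA])+, rule refl)
    also have "\<dots> = U" unfolding e2' e4'
      by (subst idr[OF pA], (rule TT2 HT[OF pA])+, subst comp_zero_r[OF pA], (rule TT2 HT[OF pA])+, rule zero_add[OF pA], (rule TT2 HT[OF pA])+)
    finally show ?thesis .
  qed
  have r1u: "cmp A' r1 U = zerom A' b1 a1'"
  proof -
    have "cmp A' r1 U = addm A' (cmp A' r1 (ident A' b1)) (cmp A' r1 (negm A' (cmp A' s1 r1)))"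
      unfolding U_def by (rule distl[OF pA], (rule TT2 HT[OF pA])+)
    also have "\<dots> = addm A' r1 (negm A' (cmp A' r1 (cmp A' s1 r1)))"
      by (subst idr[OF pA], (rule TT2 HT[OF pA])+, subst comp_neg_r[OF pA], (rule TT2 HT[OF pA])+, rule refl)
    also have "\<dots> = addm A' r1 (negm A' r1)"
      by (subst cancel[OF pA rs1], (rule TT2 HT[OF pA])+, rule refl)
    also have "\<dots> = zerom A' b1 a1'" by (rule add_neg[OF pA], (rule TT2 HT[OF pA])+)
    finally show ?thesis .
  qed
  have su: "addm A' (cmp A' s1 r1) U = ident A' b1"
  proof -
    have "addm A' (cmp A' s1 r1) U = addm A' (cmp A' s1 r1) (addm A' (negm A' (cmp A' s1 r1)) (ident A' b1))"
      unfolding U_def by (subst add_comm[OF pA], (rule TT2 HT[OF pA])+, rule refl)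
    also have "\<dots> = addm A' (addm A' (cmp A' s1 r1) (negm A' (cmp A' s1 r1))) (ident A' b1)"
      by (rule add_assoc[OF pA, symmetric], (rule TT2 HT[OF pA])+)
    also have "\<dots> = ident A' b1"
      by (subst add_neg[OF pA], (rule TT2 HT[OF pA])+, rule zero_add[OF pA], (rule TT2 HT[OF pA])+)
    finally show ?thesis .
  qed
  note L = LG[OF _ Obb(4,1,2,3) Ob' Ty' s0 s1 s2 r0 r1 r2 Phi i1' i2' p1' p2' U rs0 rs1 rs2 e5' phi1[unfolded M_def] phi2 r1u su]
  note L1 = L[OF id_functor[OF aA']]
  note L2 = L[OF G]
  show ?thesis
  proof (intro exI conjI)
    show "c \<in> Obj A" "b1 \<in> Obj A" "b2 \<in> Obj A" by (rule c b1 b2)+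
    show "Phi \<in> Hom A c b1" using hom[OF c b1] Phi by simp
    show "cmp A' s2 (cmp A' g r1) \<in> Hom A b1 b2" unfolding hom[OF b1 b2] by (rule TT2 HT[OF pA])+
  qed (rule L1, rule L2)
qed



theorem mainTheorem20:
  fixes A A' :: "('o, 'm) addcat" and B B' :: "('p, 'n) addcat"
    and Fo :: "'o \<Rightarrow> 'p" and Fm :: "'m \<Rightarrow> 'n"
    and F'o :: "'o \<Rightarrow> 'p" and F'm :: "'m \<Rightarrow> 'n"
  assumes "full_additive_subcat A A'" and "cofinal A A'"
    and "full_additive_subcat B B'" and "cofinal B B'"
    and "additive_functor A B Fo Fm"
    and "additive_functor A' B' F'o F'm"
    and "\<forall>a\<in>Obj A. F'o a = Fo a"
    and "\<forall>a\<in>Obj A. \<forall>b\<in>Obj A. \<forall>f\<in>Hom A a b. F'm f = Fm f"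
  shows "faithfully_flat A A' (\<lambda>x. x) (\<lambda>f. f)
    \<and> (flat A B Fo Fm \<longleftrightarrow> flat A' B' F'o F'm)
    \<and> (faithfully_flat A B Fo Fm \<longleftrightarrow> faithfully_flat A' B' F'o F'm)"
proof -
  have FoB: "\<And>a. a \<in> Obj A \<Longrightarrow> Fo a \<in> Obj B" using assms(5) unfolding additive_functor_def by blast
  have FmB: "\<And>a b f. a \<in> Obj A \<Longrightarrow> b \<in> Obj A \<Longrightarrow> f \<in> Hom A a b \<Longrightarrow> Fm f \<in> Hom B (Fo a) (Fo b)"
    using assms(5) unfolding additive_functor_def by blast
  have sub: "Obj A \<subseteq> Obj A'" using assms(1) unfolding full_additive_subcat_def by blast
  have hom: "\<And>a b. a \<in> Obj A \<Longrightarrow> b \<in> Obj A \<Longrightarrow> Hom A a b = Hom A' a b"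
    using assms(1) unfolding full_additive_subcat_def by blast
  note PA = P1[OF assms(1,2)]
  have bridge: "\<And>a0 a1 a2 f g. a0 \<in> Obj A \<Longrightarrow> a1 \<in> Obj A \<Longrightarrow> a2 \<in> Obj A \<Longrightarrow> f \<in> Hom A a0 a1 \<Longrightarrow> g \<in> Hom A a1 a2 \<Longrightarrow>
     exact_at B (Fo a0) (Fo a1) (Fo a2) (Fm f) (Fm g) \<longleftrightarrow> exact_at B' (F'o a0) (F'o a1) (F'o a2) (F'm f) (F'm g)"
  proof -
    fix a0 a1 a2 f g assume o: "a0 \<in> Obj A" "a1 \<in> Obj A" "a2 \<in> Obj A" and t: "f \<in> Hom A a0 a1" "g \<in> Hom A a1 a2"
    have "exact_at B (Fo a0) (Fo a1) (Fo a2) (Fm f) (Fm g) \<longleftrightarrow> exact_at B' (Fo a0) (Fo a1) (Fo a2) (Fm f) (Fm g)"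
      by (rule P1[OF assms(3,4)], (rule FoB FmB o t)+)
    also have "\<dots> \<longleftrightarrow> exact_at B' (F'o a0) (F'o a1) (F'o a2) (F'm f) (F'm g)"
      using assms(7,8) o t by simp
    finally show "exact_at B (Fo a0) (Fo a1) (Fo a2) (Fm f) (Fm g) \<longleftrightarrow> exact_at B' (F'o a0) (F'o a1) (F'o a2) (F'm f) (F'm g)" .
  qed
  have part1: "faithfully_flat A A' (\<lambda>x. x) (\<lambda>f. f)"
    unfolding faithfully_flat_def using PA by blast
  have part2: "flat A B Fo Fm \<longleftrightarrow> flat A' B' F'o F'm"
  proof
    assume fl: "flat A B Fo Fm"
    show "flat A' B' F'o F'm" unfolding flat_def
    proof (intro allI impI)
      fix a0 a1 a2 f g assume E: "exact_at A' a0 a1 a2 f g"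
      then have t: "a0 \<in> Obj A'" "a1 \<in> Obj A'" "a2 \<in> Obj A'" "f \<in> Hom A' a0 a1" "g \<in> Hom A' a1 a2"
        unfolding exact_at_def by auto
      obtain c b1 b2 \<phi> \<psi> where o: "c \<in> Obj A" "b1 \<in> Obj A" "b2 \<in> Obj A" "\<phi> \<in> Hom A c b1" "\<psi> \<in> Hom A b1 b2"
        and i1: "exact_at A' a0 a1 a2 f g \<longleftrightarrow> exact_at A' c b1 b2 \<phi> \<psi>"
        and i2: "exact_at B' (F'o a0) (F'o a1) (F'o a2) (F'm f) (F'm g) \<longleftrightarrow> exact_at B' (F'o c) (F'o b1) (F'o b2) (F'm \<phi>) (F'm \<psi>)"
        using construct[OF assms(1,2,6) t] by blast
      have "exact_at A c b1 b2 \<phi> \<psi>" using E i1 PA[OF o] by simp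
      then have "exact_at B (Fo c) (Fo b1) (Fo b2) (Fm \<phi>) (Fm \<psi>)" using fl unfolding flat_def by blast
      then show "exact_at B' (F'o a0) (F'o a1) (F'o a2) (F'm f) (F'm g)" using i2 bridge[OF o] by simp
    qed
  next
    assume fl: "flat A' B' F'o F'm"
    show "flat A B Fo Fm" unfolding flat_def
    proof (intro allI impI)
      fix a0 a1 a2 f g assume E: "exact_at A a0 a1 a2 f g"
      then have t: "a0 \<in> Obj A" "a1 \<in> Obj A" "a2 \<in> Obj A" "f \<in> Hom A a0 a1" "g \<in> Hom A a1 a2"
        unfolding exact_at_def by auto
      have "exact_at A' a0 a1 a2 f g" using E PA[OF t] by simp
      then have "exact_at B' (F'o a0) (F'o a1) (F'o a2) (F'm f) (F'm g)" using fl unfolding flat_def by blast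
      then show "exact_at B (Fo a0) (Fo a1) (Fo a2) (Fm f) (Fm g)" using bridge[OF t] by simp
    qed
  qed
  have part3: "faithfully_flat A B Fo Fm \<longleftrightarrow> faithfully_flat A' B' F'o F'm"
  proof
    assume fl: "faithfully_flat A B Fo Fm"
    show "faithfully_flat A' B' F'o F'm" unfolding faithfully_flat_def
    proof (intro ballI)
      fix a0 a1 a2 f g assume t: "a0 \<in> Obj A'" "a1 \<in> Obj A'" "a2 \<in> Obj A'" "f \<in> Hom A' a0 a1" "g \<in> Hom A' a1 a2"
      obtain c b1 b2 \<phi> \<psi> where o: "c \<in> Obj A" "b1 \<in> Obj A" "b2 \<in> Obj A" "\<phi> \<in> Hom A c b1" "\<psi> \<in> Hom A b1 b2"
        and i1: "exact_at A' a0 a1 a2 f g \<longleftrightarrow> exact_at A' c b1 b2 \<phi> \<psi>"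
        and i2: "exact_at B' (F'o a0) (F'o a1) (F'o a2) (F'm f) (F'm g) \<longleftrightarrow> exact_at B' (F'o c) (F'o b1) (F'o b2) (F'm \<phi>) (F'm \<psi>)"
        using construct[OF assms(1,2,6) t] by blast
      have "exact_at A c b1 b2 \<phi> \<psi> \<longleftrightarrow> exact_at B (Fo c) (Fo b1) (Fo b2) (Fm \<phi>) (Fm \<psi>)"
        using fl o unfolding faithfully_flat_def by blast
      then show "exact_at A' a0 a1 a2 f g \<longleftrightarrow> exact_at B' (F'o a0) (F'o a1) (F'o a2) (F'm f) (F'm g)"
        using i1 i2 PA[OF o] bridge[OF o] by simp
    qed
  next
    assume fl: "faithfully_flat A' B' F'o F'm"
    show "faithfully_flat A B Fo Fm" unfolding faithfully_flat_def
    proof (intro ballI)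
      fix a0 a1 a2 f g assume t: "a0 \<in> Obj A" "a1 \<in> Obj A" "a2 \<in> Obj A" "f \<in> Hom A a0 a1" "g \<in> Hom A a1 a2"
      have t': "a0 \<in> Obj A'" "a1 \<in> Obj A'" "a2 \<in> Obj A'" "f \<in> Hom A' a0 a1" "g \<in> Hom A' a1 a2"
        using t sub hom by auto
      have "exact_at A' a0 a1 a2 f g \<longleftrightarrow> exact_at B' (F'o a0) (F'o a1) (F'o a2) (F'm f) (F'm g)"
        using fl t' unfolding faithfully_flat_def by blast
      then show "exact_at A a0 a1 a2 f g \<longleftrightarrow> exact_at B (Fo a0) (Fo a1) (Fo a2) (Fm f) (Fm g)"
        using PA[OF t] bridge[OF t] by simp
    qed
  qed
  show ?thesis using part1 part2 part3 by blast
qed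

end
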